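(* Under Assumption A1 (with the delay process indexed by all integers), the impulse response of the channel uncertainty satisfies the following. 1. For all $i\in\mathcal{D}$ and $k=0,1,2,\dots$: $\mathbb{E}\{\omega(k,k-i)\}=0$. 2. For all $i\in\mathcal{D}$ and $k_1,k_2\in\{0,1,2,\dots\}$: $$\mathbb{E}\{\omega(k_1,k_1-i)\omega(k_2,k_2-i)\}=\delta(k_1-k_2)\,\alpha_i^2p_i(1-p_i).$$ 3. For all $i_1\neq i_2$ in $\mathcal{D}$ and $k_1,k_2\in\{0,1,2,\dots\}$: $$\mathbb{E}\{\omega(k_1,k_1-i_1)\omega(k_2,k_2-i_2)\}=-\delta(k_1-i_1-k_2+i_2)\,\alpha_{i_1}\alpha_{i_2}p_{i_1}p_{i_2}.$$
   Context: Fix an integer $\bar\tau\ge1$, let $\mathcal{D}=\{0,\dots,\bar\tau\}$, and fix real weights $\alpha_0,\dots,\alpha_{\bar\tau}$. Assumption A1: $\{\tau_n\}$ is an i.i.d. sequence of $\mathcal{D}$-valued random variables with $\Pr\{\tau_n=i\}=p_i$, where $p_i\in[0,1]$ and $\sum_ip_i=1$. Let $\delta$ denote the Kronecker delta ($\delta(0)=1$, $\delta(m)=0$ for $m\ne0$). The impulse response of the channel uncertainty is $\omega(k,n)=\alpha_i[\delta(\tau_n-i)-p_i]$ if $k=n+i$ with $i\in\mathcal{D}$, and $\omega(k,n)=0$ otherwise. *)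

theory Defs
  imports "HOL-Probability.Probability"
begin

definition kdelta :: "int \<Rightarrow> real" where
  "kdelta m = (if m = 0 then 1 else 0)"

definition omega ::
  "nat \<Rightarrow> (nat \<Rightarrow> real) \<Rightarrow> (nat \<Rightarrow> real) \<Rightarrow> (int \<Rightarrow> 'a \<Rightarrow> nat) \<Rightarrow> int \<Rightarrow> int \<Rightarrow> 'a \<Rightarrow> real" where
  "omega taubar alpha p tau k n x =
     (if 0 \<le> k - n \<and> k - n \<le> int taubar
      then alpha (nat (k - n)) * (kdelta (int (tau n x) - (k - n)) - p (nat (k - n)))
      else 0)"

definition assumption_A1 ::
  "'a measure \<Rightarrow> nat \<Rightarrow> (nat \<Rightarrow> real) \<Rightarrow> (int \<Rightarrow> 'a \<Rightarrow> nat) \<Rightarrow> bool" where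
  "assumption_A1 M taubar p tau \<longleftrightarrow>
     prob_space M \<and>
     (\<forall>n. tau n \<in> measurable M (count_space UNIV)) \<and>
     (\<forall>n. \<forall>x\<in>space M. tau n x \<in> {0..taubar}) \<and>
     prob_space.indep_vars M (\<lambda>_. count_space UNIV) tau UNIV \<and>
     (\<forall>i\<in>{0..taubar}. 0 \<le> p i \<and> p i \<le> 1) \<and>
     (\<Sum>i\<in>{0..taubar}. p i) = 1 \<and>
     (\<forall>n. \<forall>i\<in>{0..taubar}. measure M {x\<in>space M. tau n x = i} = p i)"

end

theory Submission
  imports Defs
begin

lemma A1_G:
  fixes M :: "'a measure" and taubar :: nat and p :: "nat \<Rightarrow> real"
    and tau :: "int \<Rightarrow> 'a \<Rightarrow> nat"
  assumes A: "assumption_A1 M taubar p tau" and a: "a \<le> taubar" and b: "b \<le> taubar"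
  defines "S \<equiv> \<lambda>n c. {x\<in>space M. tau n x = c}"
  shows "integral\<^sup>L M (\<lambda>x. (indicator (S n1 a) x - p a) * (indicator (S n2 b) x - p b))
     = (if n1 = n2 then (if a = b then p a else 0) else p a * p b) - p a * p b"
proof -
  interpret prob_space M using A unfolding assumption_A1_def by blast
  have meas: "\<And>n. tau n \<in> measurable M (count_space UNIV)" using A unfolding assumption_A1_def by blast
  have pr: "\<And>n c. c \<le> taubar \<Longrightarrow> measure M (S n c) = p c" using A unfolding assumption_A1_def S_def by auto
  have ind: "indep_vars (\<lambda>_. count_space UNIV) tau UNIV" using A unfolding assumption_A1_def by blast
  have Ssets: "\<And>n c. S n c \<in> events"
  proof -
    fix n c
    have "S n c = tau n -` {c} \<inter> space M" unfolding S_def by auto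
    also have "\<dots> \<in> events" using meas[of n] by (intro measurable_sets) auto
    finally show "S n c \<in> events" .
  qed
  have int: "\<And>A. A \<in> events \<Longrightarrow> integrable M (indicator A :: 'a \<Rightarrow> real)"
    by (intro integrable_real_indicator) (auto simp: emeasure_eq_measure)
  have eq: "\<And>x. (indicator (S n1 a) x - p a) * (indicator (S n2 b) x - p b)
     = (indicator (S n1 a \<inter> S n2 b) x - p b * indicator (S n1 a) x) - p a * indicator (S n2 b) x + p a * p b"
    by (auto simp: indicator_def algebra_simps)
  have "integral\<^sup>L M (\<lambda>x. (indicator (S n1 a) x - p a) * (indicator (S n2 b) x - p b))
     = measure M (S n1 a \<inter> S n2 b) - p b * p a - p a * p b + p a * p b"
    unfolding eq
    using Ssets int[OF Ssets] int[OF sets.Int[OF Ssets Ssets]] pr a b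
    by (simp add: Int_absorb2 sets.sets_into_space prob_space)
  also have "measure M (S n1 a \<inter> S n2 b) = (if n1 = n2 then (if a = b then p a else 0) else p a * p b)"
  proof (cases "n1 = n2")
    case True
    show ?thesis
    proof (cases "a = b")
      case True
      then show ?thesis using pr a \<open>n1 = n2\<close> by simp
    next
      case False
      then have "S n1 a \<inter> S n2 b = {}" using \<open>n1 = n2\<close> by (auto simp: S_def)
      then show ?thesis using False \<open>n1 = n2\<close> by simp
    qed
  next
    case False
    have "prob (\<Inter>i\<in>{n1,n2}. tau i -` ((\<lambda>n. if n = n1 then {a} else {b}) i) \<inter> space M)
       = (\<Prod>i\<in>{n1,n2}. prob (tau i -` ((\<lambda>n. if n = n1 then {a} else {b}) i) \<inter> space M))"
      by (rule indep_varsD[OF ind]) auto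
    moreover have "(\<Inter>i\<in>{n1,n2}. tau i -` ((\<lambda>n. if n = n1 then {a} else {b}) i) \<inter> space M) = S n1 a \<inter> S n2 b"
      using False by (auto simp: S_def)
    moreover have "tau n1 -` {a} \<inter> space M = S n1 a" "tau n2 -` {b} \<inter> space M = S n2 b"
      by (auto simp: S_def)
    ultimately show ?thesis using False pr a b by simp
  qed
  finally show ?thesis by simp
qed

lemma omega_eq:
  assumes "i \<le> taubar" and "x \<in> space M"
  shows "omega taubar alpha p tau (int k) (int k - int i) x
     = alpha i * (indicator {x\<in>space M. tau (int k - int i) x = i} x - p i)"
  using assms by (simp add: omega_def kdelta_def indicator_def)

theorem lemma3p1:
  fixes M :: "'a measure" and taubar :: nat and alpha p :: "nat \<Rightarrow> real"
    and tau :: "int \<Rightarrow> 'a \<Rightarrow> nat"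
  assumes "taubar \<ge> 1"
    and "assumption_A1 M taubar p tau"
  shows "(\<forall>i\<in>{0..taubar}. \<forall>k::nat.
            integral\<^sup>L M (omega taubar alpha p tau (int k) (int k - int i)) = 0)
       \<and> (\<forall>i\<in>{0..taubar}. \<forall>k1 k2::nat.
            integral\<^sup>L M (\<lambda>x. omega taubar alpha p tau (int k1) (int k1 - int i) x
                            * omega taubar alpha p tau (int k2) (int k2 - int i) x)
            = kdelta (int k1 - int k2) * (alpha i)\<^sup>2 * p i * (1 - p i))
       \<and> (\<forall>i1\<in>{0..taubar}. \<forall>i2\<in>{0..taubar}. i1 \<noteq> i2 \<longrightarrow> (\<forall>k1 k2::nat.
            integral\<^sup>L M (\<lambda>x. omega taubar alpha p tau (int k1) (int k1 - int i1) x
                            * omega taubar alpha p tau (int k2) (int k2 - int i2) x)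
            = - kdelta (int k1 - int i1 - int k2 + int i2) * alpha i1 * alpha i2 * p i1 * p i2))"
proof -
  note A = assms(2)
  interpret prob_space M using A unfolding assumption_A1_def by blast
  define S where "S \<equiv> \<lambda>n c. {x\<in>space M. tau n x = c}"
  have meas: "\<And>n. tau n \<in> measurable M (count_space UNIV)" using A unfolding assumption_A1_def by blast
  have pr: "\<And>n c. c \<le> taubar \<Longrightarrow> measure M (S n c) = p c" using A unfolding assumption_A1_def S_def by auto
  have Ssets: "\<And>n c. S n c \<in> events"
  proof -
    fix n c
    have "S n c = tau n -` {c} \<inter> space M" unfolding S_def by auto
    also have "\<dots> \<in> events" using meas[of n] by (intro measurable_sets) auto
    finally show "S n c \<in> events" .
  qed
  have prod: "integral\<^sup>L M (\<lambda>x. omega taubar alpha p tau (int k1) (int k1 - int i1) x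
                            * omega taubar alpha p tau (int k2) (int k2 - int i2) x)
     = alpha i1 * alpha i2 * ((if int k1 - int i1 = int k2 - int i2 then (if i1 = i2 then p i1 else 0) else p i1 * p i2) - p i1 * p i2)"
    if "i1 \<le> taubar" "i2 \<le> taubar" for i1 i2 k1 k2
  proof -
    have "integral\<^sup>L M (\<lambda>x. omega taubar alpha p tau (int k1) (int k1 - int i1) x
                            * omega taubar alpha p tau (int k2) (int k2 - int i2) x)
      = integral\<^sup>L M (\<lambda>x. alpha i1 * alpha i2 * ((indicator (S (int k1 - int i1) i1) x - p i1) * (indicator (S (int k2 - int i2) i2) x - p i2)))"
      by (intro Bochner_Integration.integral_cong refl) (simp add: omega_eq[OF that(1)] omega_eq[OF that(2)] S_def)
    also have "\<dots> = alpha i1 * alpha i2 * integral\<^sup>L M (\<lambda>x. (indicator (S (int k1 - int i1) i1) x - p i1) * (indicator (S (int k2 - int i2) i2) x - p i2))"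
      by simp
    also have "\<dots> = alpha i1 * alpha i2 * ((if int k1 - int i1 = int k2 - int i2 then (if i1 = i2 then p i1 else 0) else p i1 * p i2) - p i1 * p i2)"
      using A1_G[OF A that, of "int k1 - int i1" "int k2 - int i2"] unfolding S_def by simp
    finally show ?thesis .
  qed
  have p1: "integral\<^sup>L M (omega taubar alpha p tau (int k) (int k - int i)) = 0" if "i \<le> taubar" for i k
  proof -
    have "integral\<^sup>L M (omega taubar alpha p tau (int k) (int k - int i))
       = integral\<^sup>L M (\<lambda>x. alpha i * (indicator (S (int k - int i) i) x - p i))"
      by (intro Bochner_Integration.integral_cong refl) (simp add: omega_eq[OF that] S_def)
    also have "\<dots> = alpha i * (measure M (S (int k - int i) i) - p i)"
      using Ssets[of "int k - int i" i]
        integrable_real_indicator[OF Ssets[of "int k - int i" i]]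
      by (simp add: Int_absorb2 sets.sets_into_space prob_space emeasure_eq_measure)
    also have "\<dots> = 0" using pr[OF that] by simp
    finally show ?thesis .
  qed
  show ?thesis
  proof (intro conjI ballI allI impI)
    fix i k assume "i \<in> {0..taubar}"
    then show "integral\<^sup>L M (omega taubar alpha p tau (int k) (int k - int i)) = 0" using p1 by simp
  next
    fix i k1 k2 assume "i \<in> {0..taubar}"
    then show "integral\<^sup>L M (\<lambda>x. omega taubar alpha p tau (int k1) (int k1 - int i) x
                            * omega taubar alpha p tau (int k2) (int k2 - int i) x)
            = kdelta (int k1 - int k2) * (alpha i)\<^sup>2 * p i * (1 - p i)"
      using prod[of i i k1 k2] by (cases "k1 = k2") (simp_all add: kdelta_def power2_eq_square algebra_simps)
  next
    fix i1 i2 k1 k2 assume "i1 \<in> {0..taubar}" "i2 \<in> {0..taubar}" "i1 \<noteq> i2"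
    then show "integral\<^sup>L M (\<lambda>x. omega taubar alpha p tau (int k1) (int k1 - int i1) x
                            * omega taubar alpha p tau (int k2) (int k2 - int i2) x)
            = - kdelta (int k1 - int i1 - int k2 + int i2) * alpha i1 * alpha i2 * p i1 * p i2"
      using prod[of i1 i2 k1 k2] by (auto simp: kdelta_def algebra_simps)
  qed
qed

end
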